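(* Let $k\ge0$ be an integer and $a,b,c,d\in\mathbb{C}$ generic (no lower parameter a nonpositive integer). Define the polynomial of degree $2k$ in $n$ $$Q_k^{(2)}(n;a;b,c,d)={}_4F_3\!\left[\begin{matrix}-n,\ n+a,\ -k,\ k-1-a+b+c+d\\ b,\ c,\ d\end{matrix}\,\Big|\,1\right]=\sum_{j=0}^k\frac{(-n)_j(n+a)_j(-k)_j(k-1-a+b+c+d)_j}{j!\,(b)_j(c)_j(d)_j}.$$ Then, near $x=0$, $${}_4F_3\!\left[\begin{matrix}\tfrac a2,\ \tfrac12+\tfrac a2,\ 1-k+a-b-c,\ k+d\\ 1+a-b,\ 1+a-c,\ d\end{matrix}\,\Big|\,-\frac{4x}{(1-x)^2}\right]=(1-x)^a\sum_{n=0}^\infty\frac{(a)_n(b)_n(c)_n}{n!\,(1+a-b)_n(1+a-c)_n}\,Q_k^{(2)}(n;a;b,c,d)\,x^n.$$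
   Context: $(c)_n$ denotes the Pochhammer symbol, $(c)_0=1$; ${}_pF_q$ is the generalized hypergeometric series $\sum_n\frac{\prod(a_i)_n}{n!\prod(b_i)_n}x^n$. *)

theory Defs
  imports "HOL-Analysis.Analysis"
begin

definition hyp_term :: "complex list \<Rightarrow> complex list \<Rightarrow> complex \<Rightarrow> nat \<Rightarrow> complex" where
  "hyp_term as bs z n =
     (prod_list (map (\<lambda>a. pochhammer a n) as) /
      (fact n * prod_list (map (\<lambda>b. pochhammer b n) bs))) * z ^ n"

definition hypergeom :: "complex list \<Rightarrow> complex list \<Rightarrow> complex \<Rightarrow> complex" where
  "hypergeom as bs z = (\<Sum>n. hyp_term as bs z n)"

definition Q2 :: "nat \<Rightarrow> complex \<Rightarrow> complex \<Rightarrow> complex \<Rightarrow> complex \<Rightarrow> complex \<Rightarrow> complex" where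
  "Q2 k n a b c d = (\<Sum>j\<le>k.
      pochhammer (-n) j * pochhammer (n + a) j * pochhammer (- of_nat k) j
        * pochhammer (of_nat k - 1 - a + b + c + d) j
      / (fact j * pochhammer b j * pochhammer c j * pochhammer d j))"

end

theory Submission imports Defs begin


lemma tri_swap:
  fixes g :: "nat \<Rightarrow> nat \<Rightarrow> 'a::comm_monoid_add"
  shows "(\<Sum>j\<le>N. \<Sum>i\<le>N-j. g j i) = (\<Sum>s\<le>N. \<Sum>j\<le>s. g j (s-j))"
proof -
  have "(\<Sum>j\<le>N. \<Sum>i\<le>N-j. g j i) = (\<Sum>(j,i)\<in>(SIGMA j:{..N}. {..N-j}). g j i)"
    by (simp add: sum.Sigma)
  also have "(SIGMA j:{..N}. {..N-j}) = {(j,i). j+i \<le> N}" by auto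
  also have "(\<Sum>(j,i)\<in>{(j,i). j+i \<le> N}. g j i) = (\<Sum>s\<le>N. \<Sum>j\<le>s. g j (s-j))"
    by (rule sum.triangle_reindex_eq)
  finally show ?thesis .
qed

lemma saal_poly:
  fixes \<alpha> \<beta> y :: complex
  shows "(\<Sum>j\<le>N. of_nat (N choose j) * pochhammer \<alpha> j * pochhammer \<beta> j * pochhammer y (N-j)
           * pochhammer (\<alpha>+\<beta>+y+ of_nat j) (N-j)) = pochhammer (\<alpha>+y) N * pochhammer (\<beta>+y) N"
proof -
  let ?P = pochhammer
  have "(\<Sum>j\<le>N. of_nat (N choose j) * ?P \<alpha> j * ?P \<beta> j * ?P y (N-j) * ?P (\<alpha>+\<beta>+y+ of_nat j) (N-j))
     = (\<Sum>j\<le>N. \<Sum>i\<le>N-j. of_nat (N choose j) * ?P \<alpha> j * ?P \<beta> j * ?P y (N-j) *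
            (of_nat (N-j choose i) * ?P (\<alpha> + of_nat j) i * ?P (\<beta>+y) (N-j-i)))"
  proof (rule sum.cong[OF refl])
    fix j assume "j \<in> {..N}"
    have "?P (\<alpha>+\<beta>+y+ of_nat j) (N-j) = ?P ((\<alpha>+ of_nat j)+(\<beta>+y)) (N-j)" by (simp add: algebra_simps)
    also have "\<dots> = (\<Sum>i\<le>N-j. of_nat (N-j choose i) * ?P (\<alpha> + of_nat j) i * ?P (\<beta>+y) (N-j-i))"
      by (rule pochhammer_binomial_sum)
    finally show "of_nat (N choose j) * ?P \<alpha> j * ?P \<beta> j * ?P y (N-j) * ?P (\<alpha>+\<beta>+y+ of_nat j) (N-j)
       = (\<Sum>i\<le>N-j. of_nat (N choose j) * ?P \<alpha> j * ?P \<beta> j * ?P y (N-j) *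
            (of_nat (N-j choose i) * ?P (\<alpha> + of_nat j) i * ?P (\<beta>+y) (N-j-i)))"
      by (simp add: sum_distrib_left)
  qed
  also have "\<dots> = (\<Sum>j\<le>N. \<Sum>i\<le>N-j. of_nat (N choose (j+i)) * of_nat ((j+i) choose j) * ?P \<alpha> (j+i)
         * ?P \<beta> j * ?P y (N-j) * ?P (\<beta>+y) (N-(j+i)))"
  proof (intro sum.cong refl)
    fix j i assume j: "j \<in> {..N}" and i: "i \<in> {..N-j}"
    have c: "(N choose (j+i)) * ((j+i) choose j) = (N choose j) * ((N-j) choose i)"
      using choose_mult[of j "j+i" N] i j by auto
    have "of_nat (N choose (j+i)) * of_nat ((j+i) choose j) = (of_nat (N choose j) * of_nat ((N-j) choose i) :: complex)"
      by (metis c of_nat_mult)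
    moreover have "?P \<alpha> (j+i) = ?P \<alpha> j * ?P (\<alpha> + of_nat j) i" by (rule pochhammer_product')
    moreover have "N-j-i = N-(j+i)" by simp
    ultimately show "of_nat (N choose j) * ?P \<alpha> j * ?P \<beta> j * ?P y (N-j) *
            (of_nat (N-j choose i) * ?P (\<alpha> + of_nat j) i * ?P (\<beta>+y) (N-j-i)) =
       of_nat (N choose (j+i)) * of_nat ((j+i) choose j) * ?P \<alpha> (j+i)
         * ?P \<beta> j * ?P y (N-j) * ?P (\<beta>+y) (N-(j+i))"
      by (simp add: mult_ac)
  qed
  also have "\<dots> = (\<Sum>s\<le>N. \<Sum>j\<le>s. of_nat (N choose s) * of_nat (s choose j) * ?P \<alpha> s
         * ?P \<beta> j * ?P y (N-j) * ?P (\<beta>+y) (N-s))"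
    by (subst tri_swap) (intro sum.cong refl, simp)
  also have "\<dots> = (\<Sum>s\<le>N. of_nat (N choose s) * ?P \<alpha> s * ?P y (N-s) * ?P (\<beta>+y) N)"
  proof (rule sum.cong[OF refl])
    fix s assume s: "s \<in> {..N}"
    have "(\<Sum>j\<le>s. of_nat (N choose s) * of_nat (s choose j) * ?P \<alpha> s
         * ?P \<beta> j * ?P y (N-j) * ?P (\<beta>+y) (N-s)) =
         (\<Sum>j\<le>s. (of_nat (N choose s) * ?P \<alpha> s * ?P y (N-s) * ?P (\<beta>+y) (N-s)) *
            (of_nat (s choose j) * ?P \<beta> j * ?P (y + of_nat (N-s)) (s-j)))"
    proof (rule sum.cong[OF refl])
      fix j assume j: "j \<in> {..s}"
      have "?P y (N-j) = ?P y (N-s) * ?P (y + of_nat (N-s)) (N-j-(N-s))"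
        by (rule pochhammer_product) (use j s in auto)
      moreover have "N-j-(N-s) = s-j" using j s by auto
      ultimately show "of_nat (N choose s) * of_nat (s choose j) * ?P \<alpha> s
         * ?P \<beta> j * ?P y (N-j) * ?P (\<beta>+y) (N-s) = (of_nat (N choose s) * ?P \<alpha> s * ?P y (N-s) * ?P (\<beta>+y) (N-s)) *
            (of_nat (s choose j) * ?P \<beta> j * ?P (y + of_nat (N-s)) (s-j))" by (simp add: mult_ac)
    qed
    also have "\<dots> = (of_nat (N choose s) * ?P \<alpha> s * ?P y (N-s) * ?P (\<beta>+y) (N-s)) * ?P (\<beta> + (y + of_nat (N-s))) s"
      by (simp add: pochhammer_binomial_sum sum_distrib_left)
    also have "\<dots> = (of_nat (N choose s) * ?P \<alpha> s * ?P y (N-s)) * (?P (\<beta>+y) (N-s) * ?P (\<beta> + (y + of_nat (N-s))) s)"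
      by (simp add: mult_ac)
    also have "?P (\<beta>+y) (N-s) * ?P (\<beta> + (y + of_nat (N-s))) s = ?P (\<beta>+y) N"
      using pochhammer_product'[of "\<beta>+y" "N-s" s] s by (simp add: add.assoc)
    finally show "(\<Sum>j\<le>s. of_nat (N choose s) * of_nat (s choose j) * ?P \<alpha> s
         * ?P \<beta> j * ?P y (N-j) * ?P (\<beta>+y) (N-s)) = of_nat (N choose s) * ?P \<alpha> s * ?P y (N-s) * ?P (\<beta>+y) N"
      by (simp add: mult_ac)
  qed
  also have "\<dots> = ?P (\<alpha>+y) N * ?P (\<beta>+y) N"
    by (simp add: pochhammer_binomial_sum sum_distrib_right)
  finally show ?thesis .
qed



lemma binom_fact_c: "i \<le> N \<Longrightarrow> (of_nat (N choose i) :: complex) = fact N / (fact i * fact (N-i))"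
  by (simp add: binomial_fact)

lemma whip0:
  fixes a b c :: complex
  assumes g: "pochhammer (1+a-b) N \<noteq> 0" and d: "pochhammer (1+a-c) N \<noteq> 0"
  shows "(\<Sum>i\<le>N. (-1)^i * pochhammer a (N+i) * pochhammer (1+a-b-c) i /
           (fact i * fact (N-i) * pochhammer (1+a-b) i * pochhammer (1+a-c) i))
       = pochhammer a N * pochhammer b N * pochhammer c N / (fact N * pochhammer (1+a-b) N * pochhammer (1+a-c) N)"
proof -
  let ?P = pochhammer
  define \<gamma> where "\<gamma> = 1+a-b"
  define \<delta> where "\<delta> = 1+a-c"
  define e where "e = 1+a-b-c"
  define L where "L i = (-1)^i * ?P a (N+i) * ?P e i / (fact i * fact (N-i) * ?P \<gamma> i * ?P \<delta> i)" for i
  define K where "K = fact N * (-1)^N * ?P \<delta> N * ?P \<gamma> N"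
  have S: "(\<Sum>i\<le>N. of_nat (N choose i) * ?P (a + of_nat N) i * ?P e i * ?P (c-a- of_nat N) (N-i)
           * ?P ((a + of_nat N)+e+(c-a- of_nat N)+ of_nat i) (N-i)) = ?P ((a + of_nat N)+(c-a- of_nat N)) N * ?P (e+(c-a- of_nat N)) N"
    by (rule saal_poly)
  have tm: "?P a N * (of_nat (N choose i) * ?P (a + of_nat N) i * ?P e i * ?P (c-a- of_nat N) (N-i)
           * ?P ((a + of_nat N)+e+(c-a- of_nat N)+ of_nat i) (N-i)) = K * L i" if i: "i \<le> N" for i
  proof -
    have gi: "?P \<gamma> i \<noteq> 0" using g i pochhammer_neq_0_mono unfolding \<gamma>_def by blast
    have di: "?P \<delta> i \<noteq> 0" using d i pochhammer_neq_0_mono unfolding \<delta>_def by blast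
    have e1: "(a + of_nat N)+e+(c-a- of_nat N)+ of_nat i = \<gamma> + of_nat i" unfolding e_def \<gamma>_def by simp
    have e2: "?P \<gamma> N = ?P \<gamma> i * ?P (\<gamma> + of_nat i) (N-i)" using pochhammer_product[OF i] by blast
    have e3: "?P (c-a- of_nat N) N = ?P (c-a- of_nat N) (N-i) * ?P (c-a- of_nat N + of_nat (N-i)) i"
      using pochhammer_product'[of "c-a- of_nat N" "N-i" i] i by simp
    have e4: "c-a- of_nat N + of_nat (N-i) = - (a - c + of_nat i)" using i by (simp add: of_nat_diff)
    have e5: "?P (- (a - c + of_nat i)) i = (-1)^i * ?P \<delta> i"
      unfolding pochhammer_minus \<delta>_def by (simp add: algebra_simps)
    have e6: "?P (c-a- of_nat N) N = (-1)^N * ?P \<delta> N"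
      using pochhammer_minus[of "a-c+ of_nat N" N] unfolding \<delta>_def by (simp add: algebra_simps)
    have e7: "?P a (N+i) = ?P a N * ?P (a + of_nat N) i" by (rule pochhammer_product')
    have m1: "((-1::complex)^i) * (-1)^i = 1" by (simp flip: power_add add: power_even_eq[symmetric] mult_2[symmetric])
    have X: "?P (c-a- of_nat N) (N-i) * ((-1)^i * ?P \<delta> i) = (-1)^N * ?P \<delta> N"
      using e3 e4 e5 e6 by simp
    have X2: "?P \<delta> i * ?P (c-(a + of_nat N)) (N-i) = ?P \<delta> N * ((-1)^N * (-1)^i)"
    proof -
      have "(-1)^i * (?P (c-a- of_nat N) (N-i) * ((-1)^i * ?P \<delta> i)) = (-1)^i * ((-1)^N * ?P \<delta> N)"
        using X by simp
      hence "((-1)^i * (-1)^i) * (?P (c-a- of_nat N) (N-i) * ?P \<delta> i) = (-1)^i * ((-1)^N * ?P \<delta> N)"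
        by (simp only: mult_ac)
      thus ?thesis using m1 by (simp add: mult_ac diff_diff_eq)
    qed
    show ?thesis
      unfolding L_def K_def e1 binom_fact_c[OF i] e7
      using gi di e2 X2
      by (simp add: field_simps)
  qed
  have "?P a N * (?P ((a + of_nat N)+(c-a- of_nat N)) N * ?P (e+(c-a- of_nat N)) N) = (\<Sum>i\<le>N. K * L i)"
    unfolding S[symmetric] sum_distrib_left by (rule sum.cong[OF refl]) (use tm in auto)
  also have "\<dots> = K * (\<Sum>i\<le>N. L i)" by (simp add: sum_distrib_left)
  finally have F: "?P a N * (?P ((a + of_nat N)+(c-a- of_nat N)) N * ?P (e+(c-a- of_nat N)) N) = K * (\<Sum>i\<le>N. L i)" .
  have r1: "(a + of_nat N)+(c-a- of_nat N) = c" by simp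
  have r2: "?P (e+(c-a- of_nat N)) N = (-1)^N * ?P b N"
    using pochhammer_minus[of "b + of_nat N - 1" N] unfolding e_def by (simp add: algebra_simps)
  have K0: "K \<noteq> 0" unfolding K_def using g d \<gamma>_def \<delta>_def by simp
  have "(\<Sum>i\<le>N. L i) = ?P a N * (?P c N * ((-1)^N * ?P b N)) / K"
    using F K0 unfolding r1 r2 by (simp add: field_simps)
  also have "\<dots> = ?P a N * ?P b N * ?P c N / (fact N * ?P \<gamma> N * ?P \<delta> N)"
    unfolding K_def using g d \<gamma>_def \<delta>_def by (simp add: field_simps)
  finally show ?thesis unfolding L_def \<gamma>_def \<delta>_def e_def .
qed


lemma inner_saal:
  fixes d e :: complex and k m :: nat
  assumes dm: "pochhammer d m \<noteq> 0"
  shows "pochhammer (e - of_nat k) m * pochhammer (of_nat k + d) m / (fact m * pochhammer d m)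
    = (\<Sum>j\<le>m. pochhammer (- of_nat k) j * pochhammer (of_nat k + d - e) j / (fact j * pochhammer d j)
         * pochhammer e (m-j) / fact (m-j))"
proof -
  let ?P = pochhammer
  define cc where "cc j = ?P (- of_nat k) j * ?P (of_nat k + d - e) j / (fact j * ?P d j)" for j
  have S: "(\<Sum>j\<le>m. of_nat (m choose j) * ?P (- of_nat k) j * ?P (of_nat k + d - e) j * ?P e (m-j)
           * ?P ((- of_nat k)+(of_nat k + d - e)+e+ of_nat j) (m-j)) = ?P ((- of_nat k)+e) m * ?P ((of_nat k + d - e)+e) m"
    by (rule saal_poly)
  have tm: "of_nat (m choose j) * ?P (- of_nat k) j * ?P (of_nat k + d - e) j * ?P e (m-j)
           * ?P ((- of_nat k)+(of_nat k + d - e)+e+ of_nat j) (m-j) = (fact m * ?P d m) * (cc j * ?P e (m-j) / fact (m-j))"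
    if j: "j \<le> m" for j
  proof -
    have dj: "?P d j \<noteq> 0" using dm j pochhammer_neq_0_mono by blast
    have e1: "(- of_nat k)+(of_nat k + d - e)+e+ of_nat j = d + of_nat j" by simp
    have e2: "?P d m = ?P d j * ?P (d + of_nat j) (m-j)" using pochhammer_product[OF j] by blast
    show ?thesis unfolding e1 cc_def binom_fact_c[OF j] e2 using dj by (simp add: field_simps)
  qed
  have "(fact m * ?P d m) * (\<Sum>j\<le>m. cc j * ?P e (m-j) / fact (m-j)) = ?P ((- of_nat k)+e) m * ?P ((of_nat k + d - e)+e) m"
    unfolding S[symmetric] sum_distrib_left by (rule sum.cong[OF refl]) (use tm in auto)
  then show ?thesis unfolding cc_def using dm by (simp add: field_simps)
qed



lemma whip0':
  fixes a b c \<gamma> \<delta> e :: complex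
  assumes "\<gamma> = 1+a-b" "\<delta> = 1+a-c" "e = 1+a-b-c"
  assumes g: "pochhammer \<gamma> N \<noteq> 0" and d: "pochhammer \<delta> N \<noteq> 0"
  shows "(\<Sum>i\<le>N. (-1)^i * pochhammer a (N+i) * pochhammer e i /
           (fact i * fact (N-i) * pochhammer \<gamma> i * pochhammer \<delta> i))
       = pochhammer a N * pochhammer b N * pochhammer c N / (fact N * pochhammer \<gamma> N * pochhammer \<delta> N)"
  using whip0[of a b N c] assms by simp

lemma poch_neg_nat:
  assumes "j \<le> n"
  shows "pochhammer (- of_nat n :: complex) j = (-1)^j * fact n / fact (n-j)"
proof -
  have "pochhammer (- of_nat n :: complex) j = (-1)^j * pochhammer (of_nat n - of_nat j + 1) j"
    by (rule pochhammer_minus)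
  moreover have "fact n = (fact (n-j) :: complex) * pochhammer (of_nat n - of_nat j + 1) j"
    using pochhammer_product[of "n-j" n "1::complex"] assms
    by (simp add: pochhammer_fact of_nat_diff add.commute)
  ultimately show ?thesis by (simp add: field_simps)
qed

lemma finite_identity:
  fixes a b c d :: complex and k n :: nat
  assumes nb: "\<And>n. pochhammer b n \<noteq> 0" and nc: "\<And>n. pochhammer c n \<noteq> 0"
    and nd: "\<And>n. pochhammer d n \<noteq> 0" and ng: "\<And>n. pochhammer (1+a-b) n \<noteq> 0"
    and nde: "\<And>n. pochhammer (1+a-c) n \<noteq> 0"
  shows "(\<Sum>m\<le>n. pochhammer (a/2) m * pochhammer (1/2+a/2) m * pochhammer (1 - of_nat k + a - b - c) m
            * pochhammer (of_nat k + d) m / (fact m * (pochhammer (1+a-b) m * (pochhammer (1+a-c) m * pochhammer d m)))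
            * (-4)^m * pochhammer (a + 2 * of_nat m) (n-m) / fact (n-m))
       = pochhammer a n * pochhammer b n * pochhammer c n / (fact n * pochhammer (1+a-b) n * pochhammer (1+a-c) n)
         * Q2 k (of_nat n) a b c d"
proof -
  let ?P = pochhammer
  define \<gamma> where "\<gamma> = 1+a-b"
  define \<delta> where "\<delta> = 1+a-c"
  define e where "e = 1+a-b-c"
  define cc where "cc j = ?P (- of_nat k) j * ?P (of_nat k + d - e) j / (fact j * ?P d j)" for j
  define h where "h m j = (-1)^m * ?P a (n+m) / (fact (n-m) * ?P \<gamma> m * ?P \<delta> m) * (cc j * ?P e (m-j) / fact (m-j))" for m j
  define T5 where "T5 j = cc j * ((-1)^j * ?P a (n+j) * ?P b n * ?P c n / (?P b j * ?P c j * fact (n-j) * ?P \<gamma> n * ?P \<delta> n))" for j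
  define F where "F j = ?P a n * ?P b n * ?P c n / (fact n * ?P (1+a-b) n * ?P (1+a-c) n) *
       (?P (- of_nat n) j * ?P (of_nat n + a) j * ?P (- of_nat k) j * ?P (of_nat k - 1 - a + b + c + d) j
      / (fact j * ?P b j * ?P c j * ?P d j))" for j
  have step1: "?P (a/2) m * ?P (1/2+a/2) m * ?P (1 - of_nat k + a - b - c) m
            * ?P (of_nat k + d) m / (fact m * (?P (1+a-b) m * (?P (1+a-c) m * ?P d m)))
            * (-4)^m * ?P (a + 2 * of_nat m) (n-m) / fact (n-m) = (\<Sum>j\<le>m. h m j)" if m: "m \<le> n" for m
  proof -
    have pd: "?P a (2*m) = of_nat (2^(2*m)) * ?P (a/2) m * ?P (1/2+a/2) m"
      using pochhammer_double[of "a/2" m] by (simp add: add.commute)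
    have pp: "?P a (2*m) * ?P (a + 2 * of_nat m) (n-m) = ?P a (n+m)"
      using pochhammer_product'[of a "2*m" "n-m"] m by (simp add: add.commute)
    have in1: "?P (e - of_nat k) m * ?P (of_nat k + d) m / (fact m * ?P d m) = (\<Sum>j\<le>m. cc j * ?P e (m-j) / fact (m-j))"
      unfolding cc_def by (rule inner_saal[OF nd])
    have ek: "1 - of_nat k + a - b - c = e - of_nat k" unfolding e_def by simp
    have m4: "((-4)::complex)^m = (-1)^m * of_nat (2^(2*m))"
    proof -
      have "(-4::complex)^m = ((-1) * 4)^m" by simp
      also have "\<dots> = (-1)^m * 4^m" by (rule power_mult_distrib)
      also have "(4::complex)^m = of_nat (2^(2*m))" by (simp add: power_mult)
      finally show ?thesis .
    qed
    have "?P (a/2) m * ?P (1/2+a/2) m * ?P (1 - of_nat k + a - b - c) m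
            * ?P (of_nat k + d) m / (fact m * (?P (1+a-b) m * (?P (1+a-c) m * ?P d m)))
            * (-4)^m * ?P (a + 2 * of_nat m) (n-m) / fact (n-m)
         = (-1)^m * (?P a (2*m) * ?P (a + 2 * of_nat m) (n-m)) / (fact (n-m) * ?P \<gamma> m * ?P \<delta> m) *
            (?P (e - of_nat k) m * ?P (of_nat k + d) m / (fact m * ?P d m))"
      unfolding pd ek m4 \<gamma>_def \<delta>_def using ng[of m] nde[of m] nd[of m] by (simp add: field_simps)
    also have "\<dots> = (\<Sum>j\<le>m. h m j)" unfolding pp in1 h_def by (simp add: sum_distrib_left)
    finally show ?thesis .
  qed
  have "(\<Sum>m\<le>n. ?P (a/2) m * ?P (1/2+a/2) m * ?P (1 - of_nat k + a - b - c) m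
            * ?P (of_nat k + d) m / (fact m * (?P (1+a-b) m * (?P (1+a-c) m * ?P d m)))
            * (-4)^m * ?P (a + 2 * of_nat m) (n-m) / fact (n-m)) = (\<Sum>m\<le>n. \<Sum>j\<le>m. h m j)"
    by (rule sum.cong[OF refl]) (use step1 in auto)
  also have "\<dots> = (\<Sum>j\<le>n. \<Sum>i\<le>n-j. h (j+i) j)"
    using tri_swap[of "\<lambda>j i. h (j+i) j" n] by simp
  also have "\<dots> = (\<Sum>j\<le>n. T5 j)"
  proof (rule sum.cong[OF refl])
    fix j assume "j \<in> {..n}"
    hence j: "j \<le> n" by simp
    define N where "N = n - j"
    have gj: "?P \<gamma> n = ?P \<gamma> j * ?P (\<gamma> + of_nat j) N" unfolding N_def using pochhammer_product[OF j] by blast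
    have dj: "?P \<delta> n = ?P \<delta> j * ?P (\<delta> + of_nat j) N" unfolding N_def using pochhammer_product[OF j] by blast
    have bj: "?P b n = ?P b j * ?P (b + of_nat j) N" unfolding N_def using pochhammer_product[OF j] by blast
    have cj: "?P c n = ?P c j * ?P (c + of_nat j) N" unfolding N_def using pochhammer_product[OF j] by blast
    have aj: "?P a (n+j) = ?P a (2*j) * ?P (a + 2 * of_nat j) N" 
    proof -
      have e: "2*j+(n-j) = n+j" using j by simp
      have f: "(of_nat (2*j)::complex) = 2 * of_nat j" by simp
      show ?thesis using pochhammer_product'[of a "2*j" "n-j"] unfolding e f N_def .
    qed
    have g0: "?P \<gamma> n \<noteq> 0" "?P \<delta> n \<noteq> 0" using ng nde unfolding \<gamma>_def \<delta>_def by auto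
    have W: "(\<Sum>i\<le>N. (-1)^i * ?P (a + 2 * of_nat j) (N+i) * ?P e i /
           (fact i * fact (N-i) * ?P (\<gamma> + of_nat j) i * ?P (\<delta> + of_nat j) i))
       = ?P (a + 2 * of_nat j) N * ?P (b + of_nat j) N * ?P (c + of_nat j) N / (fact N * ?P (\<gamma> + of_nat j) N * ?P (\<delta> + of_nat j) N)"
      by (rule whip0') (use g0 gj dj in \<open>auto simp: \<gamma>_def \<delta>_def e_def\<close>)
    have hterm: "h (j+i) j = cc j * (-1)^j * ?P a (2*j) / (?P \<gamma> j * ?P \<delta> j) *
        ((-1)^i * ?P (a + 2 * of_nat j) (N+i) * ?P e i /
           (fact i * fact (N-i) * ?P (\<gamma> + of_nat j) i * ?P (\<delta> + of_nat j) i))" if i: "i \<le> N" for i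
    proof -
      have a1: "?P a (n+(j+i)) = ?P a (2*j) * ?P (a + 2 * of_nat j) (N+i)"
      proof -
        have e: "2*j+(N+i) = n+(j+i)" using j i unfolding N_def by simp
        have f: "(of_nat (2*j)::complex) = 2 * of_nat j" by simp
        show ?thesis using pochhammer_product'[of a "2*j" "N+i"] unfolding e f .
      qed
      have g1: "?P \<gamma> (j+i) = ?P \<gamma> j * ?P (\<gamma> + of_nat j) i" by (rule pochhammer_product')
      have d1: "?P \<delta> (j+i) = ?P \<delta> j * ?P (\<delta> + of_nat j) i" by (rule pochhammer_product')
      have n1: "n - (j+i) = N - i" unfolding N_def by simp
      have gz: "?P \<gamma> j \<noteq> 0" "?P \<delta> j \<noteq> 0" using ng nde unfolding \<gamma>_def \<delta>_def by auto
      have gz2: "?P (\<gamma> + of_nat j) i \<noteq> 0" "?P (\<delta> + of_nat j) i \<noteq> 0"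
        using g1 d1 ng nde unfolding \<gamma>_def \<delta>_def by (metis mult_eq_0_iff)+
      show ?thesis unfolding h_def a1 g1 d1 n1 using gz gz2 by (simp add: field_simps power_add)
    qed
    have "(\<Sum>i\<le>n-j. h (j+i) j) = cc j * (-1)^j * ?P a (2*j) / (?P \<gamma> j * ?P \<delta> j) *
        (?P (a + 2 * of_nat j) N * ?P (b + of_nat j) N * ?P (c + of_nat j) N / (fact N * ?P (\<gamma> + of_nat j) N * ?P (\<delta> + of_nat j) N))"
      unfolding W[symmetric] N_def[symmetric] sum_distrib_left by (rule sum.cong[OF refl]) (use hterm in auto)
    also have "\<dots> = T5 j"
      unfolding T5_def gj dj bj cj aj N_def[symmetric] using g0 nb nc unfolding gj dj
      by (simp add: field_simps)
    finally show "(\<Sum>i\<le>n-j. h (j+i) j) = T5 j" .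
  qed
  also have "\<dots> = (\<Sum>j\<le>n. F j)"
  proof (rule sum.cong[OF refl])
    fix j assume "j \<in> {..n}"
    hence j: "j \<le> n" by simp
    have an: "?P a n * ?P (of_nat n + a) j = ?P a (n+j)" using pochhammer_product'[of a n j] by (simp add: add.commute)
    have kk: "of_nat k - 1 - a + b + c + d = of_nat k + d - e" unfolding e_def by simp
    show "T5 j = F j" unfolding T5_def F_def cc_def poch_neg_nat[OF j] kk \<gamma>_def \<delta>_def an[symmetric]
      using nb nc nd ng nde by (simp add: field_simps)
  qed
  also have "\<dots> = (\<Sum>j\<le>n+k. F j)"
    by (rule sum.mono_neutral_left) (auto simp: F_def pochhammer_of_nat_eq_0_lemma)
  also have "\<dots> = (\<Sum>j\<le>k. F j)"
    by (rule sum.mono_neutral_right) (auto simp: F_def pochhammer_of_nat_eq_0_lemma)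
  also have "\<dots> = ?P a n * ?P b n * ?P c n / (fact n * ?P (1+a-b) n * ?P (1+a-c) n) * Q2 k (of_nat n) a b c d"
    unfolding F_def Q2_def by (simp add: sum_distrib_left)
  finally show ?thesis .
qed



lemma norm_poch_le:
  fixes w :: complex and s :: real
  assumes "norm w \<le> s"
  shows "norm (pochhammer w p) \<le> pochhammer s p"
proof (induction p)
  case 0 then show ?case by simp
next
  case (Suc p)
  have s0: "0 \<le> s" using assms norm_ge_zero order_trans by blast
  have "norm (pochhammer w (Suc p)) = norm (pochhammer w p) * norm (w + of_nat p)"
    by (simp add: pochhammer_Suc norm_mult)
  also have "\<dots> \<le> pochhammer s p * (s + of_nat p)"
  proof (rule mult_mono[OF Suc])
    have "norm (w + of_nat p) \<le> norm w + norm (of_nat p :: complex)" by (rule norm_triangle_ineq)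
    also have "\<dots> \<le> s + of_nat p" using assms by simp
    finally show "norm (w + of_nat p) \<le> s + of_nat p" .
    show "0 \<le> pochhammer s p" using s0 by (induction p) (auto simp: pochhammer_Suc)
  qed simp
  also have "\<dots> = pochhammer s (Suc p)" by (simp add: pochhammer_Suc)
  finally show ?case .
qed

lemma poch_real_le:
  fixes s :: real assumes "0 \<le> s"
  shows "pochhammer s m \<le> (s + 1)^m * fact m"
proof (induction m)
  case 0 then show ?case by simp
next
  case (Suc m)
  have "pochhammer s (Suc m) = pochhammer s m * (s + of_nat m)" by (simp add: pochhammer_Suc)
  also have "\<dots> \<le> ((s + 1)^m * fact m) * ((s+1) * (of_nat m + 1))"
  proof (rule mult_mono[OF Suc])
    show "s + of_nat m \<le> (s+1) * (of_nat m + 1)" using assms by (simp add: algebra_simps)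
    show "0 \<le> (s + 1)^m * fact m" using assms by simp
  qed (use assms in auto)
  also have "\<dots> = (s+1)^Suc m * fact (Suc m)" by (simp add: algebra_simps)
  finally show ?case .
qed

lemma norm_poch_upper:
  fixes u :: complex
  shows "norm (pochhammer u m) \<le> (norm u + 1)^m * fact m"
  using norm_poch_le[of u "norm u" m] poch_real_le[of "norm u" m] by simp

lemma lin_lower:
  fixes l :: complex
  assumes "\<forall>n::nat. l \<noteq> - of_nat n"
  shows "\<exists>\<delta>>0. \<forall>i::nat. \<delta> * (of_nat i + 1) \<le> norm (l + of_nat i)"
proof -
  define M where "M = nat \<lceil>2 * norm l\<rceil> + 1"
  define S where "S = (\<lambda>i::nat. norm (l + of_nat i) / (of_nat i + 1)) ` {..<M}"
  have fS: "finite S" "S \<noteq> {}" unfolding S_def M_def by auto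
  have Spos: "\<forall>s\<in>S. s > 0"
  proof
    fix s assume "s \<in> S"
    then obtain i where "s = norm (l + of_nat i) / (of_nat i + 1)" unfolding S_def by auto
    moreover have "l + of_nat i \<noteq> 0" using assms[rule_format, of i] by (auto simp: add_eq_0_iff)
    ultimately show "s > 0" by simp
  qed
  define \<delta> where "\<delta> = min (1/4) (Min S)"
  have \<delta>0: "\<delta> > 0" unfolding \<delta>_def using fS Spos by auto
  have "\<delta> * (of_nat i + 1) \<le> norm (l + of_nat i)" for i
  proof (cases "i < M")
    case True
    hence "norm (l + of_nat i) / (of_nat i + 1) \<in> S" unfolding S_def by auto
    hence "Min S \<le> norm (l + of_nat i) / (of_nat i + 1)" using fS by (intro Min_le) auto
    hence "\<delta> \<le> norm (l + of_nat i) / (of_nat i + 1)" unfolding \<delta>_def by linarith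
    thus ?thesis by (simp add: field_simps)
  next
    case False
    hence i1: "real i \<ge> 2 * norm l" "real i \<ge> 1" unfolding M_def by linarith+
    have "norm (of_nat i :: complex) \<le> norm (l + of_nat i) + norm l"
      using norm_triangle_ineq4[of "l + of_nat i" l] by simp
    hence "real i - norm l \<le> norm (l + of_nat i)" by simp
    moreover have "\<delta> * (of_nat i + 1) \<le> (1/4) * (of_nat i + 1)" unfolding \<delta>_def by (intro mult_right_mono) auto
    moreover have "(1/4) * (of_nat i + 1) \<le> real i - norm l" using i1 by (simp add: field_simps)
    ultimately show ?thesis by linarith
  qed
  with \<delta>0 show ?thesis by blast
qed

lemma norm_poch_lower:
  fixes l :: complex
  assumes "\<forall>n::nat. l \<noteq> - of_nat n"
  shows "\<exists>\<delta>>0. \<forall>m. \<delta>^m * fact m \<le> norm (pochhammer l m)"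
proof -
  obtain \<delta> where d: "\<delta> > 0" "\<And>i::nat. \<delta> * (of_nat i + 1) \<le> norm (l + of_nat i)"
    using lin_lower[OF assms] by blast
  have "\<delta>^m * fact m \<le> norm (pochhammer l m)" for m
  proof (induction m)
    case 0 then show ?case by simp
  next
    case (Suc m)
    have "\<delta>^Suc m * fact (Suc m) = (\<delta>^m * fact m) * (\<delta> * (of_nat m + 1))" by (simp add: algebra_simps)
    also have "\<dots> \<le> norm (pochhammer l m) * norm (l + of_nat m)"
      by (rule mult_mono[OF Suc d(2)]) (use d in auto)
    also have "\<dots> = norm (pochhammer l (Suc m))" by (simp add: pochhammer_Suc norm_mult)
    finally show ?case .
  qed
  with d show ?thesis by blast
qed

lemma bin_real:
  fixes s t :: real assumes "0 \<le> t" "t < 1"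
  shows "(\<lambda>p. pochhammer s p / fact p * t^p) sums (1 - t) powr (-s)"
proof -
  have "(\<lambda>p. ((-s) gchoose p) * (-t)^p) sums (1 + (-t)) powr (-s)"
    by (rule gen_binomial_real) (use assms in auto)
  moreover have "((-s) gchoose p) * (-t)^p = pochhammer s p / fact p * t^p" for p
    by (simp add: gbinomial_pochhammer power_mult_distrib[symmetric] flip: power_mult_distrib)
  ultimately show ?thesis by simp
qed

lemma bin_cx:
  fixes w x :: complex assumes "norm x < 1"
  shows "(\<lambda>p. pochhammer w p / fact p * x^p) sums (1 - x) powr (-w)"
proof -
  have "(\<lambda>p. ((-w) gchoose p) * (-x)^p) sums (1 + (-x)) powr (-w)"
    by (rule gen_binomial_complex) (use assms in auto)
  moreover have "((-w) gchoose p) * (-x)^p = pochhammer w p / fact p * x^p" for p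
    by (simp add: gbinomial_pochhammer power_mult_distrib[symmetric] flip: power_mult_distrib)
  ultimately show ?thesis by simp
qed



lemma coef_bound:
  fixes u1 u2 u3 u4 l1 l2 l3 :: complex
  assumes "\<forall>n::nat. l1 \<noteq> - of_nat n" "\<forall>n::nat. l2 \<noteq> - of_nat n" "\<forall>n::nat. l3 \<noteq> - of_nat n"
  shows "\<exists>K>0. \<forall>m. norm (pochhammer u1 m * pochhammer u2 m * pochhammer u3 m * pochhammer u4 m
            / (fact m * (pochhammer l1 m * (pochhammer l2 m * pochhammer l3 m)))) \<le> K^m"
proof -
  obtain d1 where d1: "d1 > 0" "\<And>m. d1^m * fact m \<le> norm (pochhammer l1 m)" using norm_poch_lower[OF assms(1)] by blast
  obtain d2 where d2: "d2 > 0" "\<And>m. d2^m * fact m \<le> norm (pochhammer l2 m)" using norm_poch_lower[OF assms(2)] by blast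
  obtain d3 where d3: "d3 > 0" "\<And>m. d3^m * fact m \<le> norm (pochhammer l3 m)" using norm_poch_lower[OF assms(3)] by blast
  define N where "N = (norm u1 + 1) * (norm u2 + 1) * (norm u3 + 1) * (norm u4 + 1)"
  define K where "K = N / (d1 * d2 * d3)"
  have N0: "N > 0" unfolding N_def by (intro mult_pos_pos) (auto intro: add_nonneg_pos)
  have K0: "K > 0" unfolding K_def using N0 d1 d2 d3 by simp
  have "norm (pochhammer u1 m * pochhammer u2 m * pochhammer u3 m * pochhammer u4 m
            / (fact m * (pochhammer l1 m * (pochhammer l2 m * pochhammer l3 m)))) \<le> K^m" for m
  proof -
    have num: "norm (pochhammer u1 m * pochhammer u2 m * pochhammer u3 m * pochhammer u4 m)
       \<le> ((norm u1 + 1)^m * fact m) * ((norm u2 + 1)^m * fact m) * ((norm u3 + 1)^m * fact m) * ((norm u4 + 1)^m * fact m)"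
      unfolding norm_mult
      by (intro mult_mono norm_poch_upper) (auto intro!: mult_nonneg_nonneg)
    have den: "fact m * ((d1^m * fact m) * ((d2^m * fact m) * (d3^m * fact m)))
       \<le> norm (fact m * (pochhammer l1 m * (pochhammer l2 m * pochhammer l3 m)) :: complex)"
      unfolding norm_mult
      by (intro mult_mono d1 d2 d3) (auto intro!: mult_nonneg_nonneg simp: d1 d2 d3 less_imp_le)
    have dpos: "0 < fact m * ((d1^m * fact m) * ((d2^m * fact m) * (d3^m * fact m)))"
      using d1 d2 d3 by simp
    have "norm (pochhammer u1 m * pochhammer u2 m * pochhammer u3 m * pochhammer u4 m
            / (fact m * (pochhammer l1 m * (pochhammer l2 m * pochhammer l3 m))))
       \<le> (((norm u1 + 1)^m * fact m) * ((norm u2 + 1)^m * fact m) * ((norm u3 + 1)^m * fact m) * ((norm u4 + 1)^m * fact m))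
         / (fact m * ((d1^m * fact m) * ((d2^m * fact m) * (d3^m * fact m))))"
      unfolding norm_divide by (rule frac_le[OF _ num dpos den]) (auto intro!: mult_nonneg_nonneg)
    also have "\<dots> = (N^m * (fact m * fact m * fact m * fact m)) / ((d1^m * d2^m * d3^m) * (fact m * fact m * fact m * fact m))"
      unfolding N_def power_mult_distrib by (simp only: mult_ac)
    also have "\<dots> = N^m / (d1^m * d2^m * d3^m)" by simp
    also have "\<dots> = K^m" unfolding K_def by (simp add: power_divide power_mult_distrib)
    finally show ?thesis .
  qed
  with K0 show ?thesis by blast
qed



lemma analytic_main:
  fixes A :: "nat \<Rightarrow> complex" and a :: complex and K :: real
  assumes K: "K > 0" and AK: "\<And>m. norm (A m) \<le> K^m"
  shows "\<exists>r>0. \<forall>x::complex. norm x < r \<longrightarrow>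
     (\<exists>S. (\<lambda>m. A m * (-4 * x / (1-x)^2)^m * (1-x) powr (-a)) sums S \<and>
          (\<lambda>n. (\<Sum>m\<le>n. A m * (-4)^m * pochhammer (a + 2 * of_nat m) (n-m) / fact (n-m)) * x^n) sums S)"
proof -
  define r where "r = min (1/2) (1 / (32 * K))"
  have r0: "r > 0" unfolding r_def using K by simp
  have "\<exists>S. (\<lambda>m. A m * (-4 * x / (1-x)^2)^m * (1-x) powr (-a)) sums S \<and>
          (\<lambda>n. (\<Sum>m\<le>n. A m * (-4)^m * pochhammer (a + 2 * of_nat m) (n-m) / fact (n-m)) * x^n) sums S"
    if x: "norm x < r" for x
  proof -
    define t where "t = norm x"
    have t0: "0 \<le> t" "t < 1/2" "t < 1" using x r_def unfolding t_def by auto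
    have tK: "32 * K * t \<le> 1" using x K unfolding r_def t_def by (simp add: field_simps)
    have x1: "norm x < 1" using t0 t_def by simp
    have x1n: "1 - x \<noteq> 0" using x1 by auto
    define g where "g m p = pochhammer (a + 2 * of_nat m) p / fact p * x^p" for m p
    define F where "F m p = A m * (-4)^m * x^m * g m p" for m p
    define na where "na = norm a"
    have gs: "(\<lambda>p. g m p) sums (1-x) powr (-(a + 2 * of_nat m))" for m
      unfolding g_def by (rule bin_cx[OF x1])
    have gb: "norm (g m p) \<le> pochhammer (na + 2 * of_nat m) p / fact p * t^p" for m p
    proof -
      have "norm (a + 2 * of_nat m) \<le> na + 2 * of_nat m"
        unfolding na_def using norm_triangle_ineq[of a "2 * of_nat m"] by simp
      hence "norm (pochhammer (a + 2 * of_nat m) p) \<le> pochhammer (na + 2 * of_nat m) p" by (rule norm_poch_le)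
      thus ?thesis unfolding g_def t_def by (simp add: norm_mult norm_divide norm_power divide_right_mono mult_right_mono)
    qed
    have bs: "(\<lambda>p. pochhammer (na + 2 * of_nat m) p / fact p * t^p) sums (1 - t) powr (-(na + 2 * of_nat m))" for m
      by (rule bin_real) (use t0 in auto)
    have ngs: "summable (\<lambda>p. norm (g m p))" for m
      by (rule summable_comparison_test[OF _ sums_summable[OF bs]]) (use gb in auto)
    have ngle: "(\<Sum>p. norm (g m p)) \<le> (1 - t) powr (-(na + 2 * of_nat m))" for m
      using suminf_le[OF gb ngs sums_summable[OF bs]] sums_unique[OF bs] by simp
    define R where "R m = norm (A m) * 4^m * t^m * (\<Sum>p. norm (g m p))" for m
    have rowN: "((\<lambda>p. norm (F m p)) has_sum R m) UNIV" for m
    proof -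
      have "(\<lambda>p. norm (A m) * 4^m * t^m * norm (g m p)) sums R m"
        unfolding R_def by (intro sums_mult summable_sums ngs)
      moreover have "norm (F m p) = norm (A m) * 4^m * t^m * norm (g m p)" for p
        unfolding F_def t_def by (simp add: norm_mult norm_power)
      ultimately show ?thesis using t0 by (intro sums_nonneg_imp_has_sum) (auto intro!: mult_nonneg_nonneg)
    qed
    define E where "E = (1 - t) powr (- na)"
    have Rb: "R m \<le> E * (1/2)^m" for m
    proof -
      have pw: "(1 - t) powr (-(na + 2 * of_nat m)) = E / ((1-t)^2)^m"
      proof -
        have "(1 - t) powr (-(na + 2 * of_nat m)) = (1-t) powr (- na) / (1-t) powr (of_nat (2*m))"
          by (subst powr_diff[symmetric]) simp
        also have "(1-t) powr (of_nat (2*m)) = (1-t)^(2*m)" using t0 by (intro powr_realpow) auto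
        finally show ?thesis unfolding E_def by (simp add: power_mult)
      qed
      have E0: "E \<ge> 0" unfolding E_def by simp
      have "R m \<le> norm (A m) * 4^m * t^m * (E / ((1-t)^2)^m)"
        unfolding R_def pw[symmetric] using t0 by (intro mult_left_mono ngle) (auto intro!: mult_nonneg_nonneg)
      also have "\<dots> = E * (norm (A m) * (4 * t / (1-t)^2)^m)" by (simp add: power_divide power_mult_distrib)
      also have "\<dots> \<le> E * (K^m * (4 * t / (1-t)^2)^m)"
        by (intro mult_left_mono mult_right_mono AK E0) (use t0 in auto)
      also have "\<dots> = E * (K * (4 * t / (1-t)^2))^m" by (simp only: power_mult_distrib)
      also have "\<dots> \<le> E * (1/2)^m"
      proof (intro mult_left_mono E0 power_mono)
        have q0: "(1/2::real) \<le> 1-t" using t0 by simp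
        have "(1/2::real)^2 \<le> (1-t)^2" by (rule power_mono[OF q0]) simp
        hence q: "(1-t)^2 \<ge> 1/4" by (simp add: power2_eq_square)
        have "K * (4 * t / (1-t)^2) = 4 * K * t / (1-t)^2" by simp
        also have "\<dots> \<le> 4 * K * t / (1/4)" using q K t0 by (intro divide_left_mono) auto
        also have "\<dots> \<le> 1/2" using tK by simp
        finally show "K * (4 * t / (1-t)^2) \<le> 1/2" .
        show "0 \<le> K * (4 * t / (1-t)^2)" using K t0 by simp
      qed
      finally show ?thesis .
    qed
    have R0: "R m \<ge> 0" for m unfolding R_def using t0 by (auto intro!: mult_nonneg_nonneg suminf_nonneg ngs)
    have Rsum: "R summable_on UNIV"
    proof (rule summable_nonneg_imp_summable_on_strong)
      show "summable R"
        by (rule summable_comparison_test[of _ "\<lambda>m. E * (1/2)^m"]) (use Rb R0 in \<open>auto intro!: summable_mult summable_geometric\<close>)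
    qed (use R0 in auto)
    have absS: "(\<lambda>q. norm ((\<lambda>(m,p). F m p) q)) summable_on (UNIV \<times> UNIV)"
      by (rule summable_on_SigmaI[where f="\<lambda>q. norm ((\<lambda>(m,p). F m p) q)" and g=R and A=UNIV and B="\<lambda>_. UNIV"])
         (use rowN Rsum in auto)
    have sumS: "(\<lambda>(m,p). F m p) summable_on (UNIV \<times> UNIV)"
      using absS by (rule abs_summable_summable)
    define S where "S = infsum (\<lambda>(m,p). F m p) (UNIV \<times> UNIV)"
    have hS: "((\<lambda>(m,p). F m p) has_sum S) (UNIV \<times> UNIV)" unfolding S_def using sumS by simp
    have row: "((\<lambda>p. F m p) has_sum (A m * (-4)^m * x^m * (1-x) powr (-(a + 2 * of_nat m)))) UNIV" for m
    proof (rule norm_summable_imp_has_sum)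
      show "(\<lambda>p. F m p) sums (A m * (-4)^m * x^m * (1-x) powr (-(a + 2 * of_nat m)))"
        unfolding F_def by (intro sums_mult gs)
      show "summable (\<lambda>p. norm (F m p))" using rowN[of m] has_sum_imp_sums sums_summable by blast
    qed
    have s1: "(\<lambda>m. A m * (-4)^m * x^m * (1-x) powr (-(a + 2 * of_nat m))) sums S"
      using has_sum_Sigma'[OF hS, of "\<lambda>m. A m * (-4)^m * x^m * (1-x) powr (-(a + 2 * of_nat m))"] row
      by (auto intro: has_sum_imp_sums)
    have eq1: "A m * (-4)^m * x^m * (1-x) powr (-(a + 2 * of_nat m)) = A m * (-4 * x / (1-x)^2)^m * (1-x) powr (-a)" for m
    proof -
      have "(1-x) powr (-(a + 2 * of_nat m)) = (1-x) powr (-a) / (1-x) powr (of_nat (2*m))"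
        by (subst powr_diff[symmetric]) simp
      also have "(1-x) powr (of_nat (2*m)) = (1-x)^(2*m)" using x1n by (rule powr_nat'[OF disjI1])
      finally have pe: "(1-x) powr (-(a + 2 * of_nat m)) = (1-x) powr (-a) / ((1-x)^2)^m" by (simp add: power_mult)
      have ze: "(-4 * x / (1-x)^2)^m = (-4)^m * x^m / ((1-x)^2)^m" by (simp only: power_divide power_mult_distrib)
      show ?thesis unfolding pe ze by simp
    qed
    have s2: "(\<lambda>n. (\<Sum>m\<le>n. A m * (-4)^m * pochhammer (a + 2 * of_nat m) (n-m) / fact (n-m)) * x^n) sums S"
    proof -
      have "((\<lambda>(n,m). F m (n-m)) has_sum S) (SIGMA n:UNIV. {..n})"
      proof -
        have "((\<lambda>(m,p). F m p) has_sum S) (UNIV \<times> UNIV) = ((\<lambda>(n,m). F m (n-m)) has_sum S) (SIGMA n:UNIV. {..n})"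
          by (rule has_sum_reindex_bij_witness[where j="\<lambda>(m,p). (m+p, m)" and i="\<lambda>(n,m). (m, n-m)"]) auto
        with hS show ?thesis by simp
      qed
      from has_sum_Sigma'[OF this, of "\<lambda>n. \<Sum>m\<le>n. F m (n-m)"]
      have "((\<lambda>n. \<Sum>m\<le>n. F m (n-m)) has_sum S) UNIV" by auto
      hence "(\<lambda>n. \<Sum>m\<le>n. F m (n-m)) sums S" by (rule has_sum_imp_sums)
      moreover have "(\<Sum>m\<le>n. F m (n-m)) = (\<Sum>m\<le>n. A m * (-4)^m * pochhammer (a + 2 * of_nat m) (n-m) / fact (n-m)) * x^n" for n
        unfolding sum_distrib_right
      proof (rule sum.cong[OF refl])
        fix m assume "m \<in> {..n}"
        hence "x^m * x^(n-m) = x^n" by (simp flip: power_add)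
        thus "F m (n-m) = A m * (-4)^m * pochhammer (a + 2 * of_nat m) (n-m) / fact (n-m) * x^n"
          unfolding F_def g_def by (simp add: mult_ac)
      qed
      ultimately show ?thesis by simp
    qed
    from s1 s2 show ?thesis unfolding eq1 by blast
  qed
  with r0 show ?thesis by blast
qed



theorem theorem4:
  fixes k :: nat and a b c d :: complex
  assumes "\<forall>m::nat. b \<noteq> - of_nat m" and "\<forall>m::nat. c \<noteq> - of_nat m"
      and "\<forall>m::nat. d \<noteq> - of_nat m"
      and "\<forall>m::nat. 1 + a - b \<noteq> - of_nat m" and "\<forall>m::nat. 1 + a - c \<noteq> - of_nat m"
  shows "\<exists>r>0. \<forall>x::complex. norm x < r \<longrightarrow>
    (let as = [a/2, 1/2 + a/2, 1 - of_nat k + a - b - c, of_nat k + d];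
         bs = [1 + a - b, 1 + a - c, d];
         z = - 4 * x / (1 - x)^2;
         t = (\<lambda>n. pochhammer a n * pochhammer b n * pochhammer c n
                  / (fact n * pochhammer (1 + a - b) n * pochhammer (1 + a - c) n)
                  * Q2 k (of_nat n) a b c d * x ^ n)
     in summable (hyp_term as bs z) \<and> summable t \<and>
        hypergeom as bs z = (1 - x) powr a * (\<Sum>n. t n))"
proof -
  let ?P = pochhammer
  have nz: "\<And>n. ?P w n \<noteq> 0" if "\<forall>m::nat. w \<noteq> - of_nat m" for w :: complex
    using that by (auto simp: pochhammer_eq_0_iff)
  have nb: "\<And>n. ?P b n \<noteq> 0" and nc: "\<And>n. ?P c n \<noteq> 0" and nd: "\<And>n. ?P d n \<noteq> 0"
    and ng: "\<And>n. ?P (1+a-b) n \<noteq> 0" and nde: "\<And>n. ?P (1+a-c) n \<noteq> 0"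
    using nz assms by blast+
  define A where "A m = ?P (a/2) m * ?P (1/2+a/2) m * ?P (1 - of_nat k + a - b - c) m
            * ?P (of_nat k + d) m / (fact m * (?P (1+a-b) m * (?P (1+a-c) m * ?P d m)))" for m
  obtain K where K: "K > 0" "\<And>m. norm (A m) \<le> K^m"
    using coef_bound[OF assms(4) assms(5) assms(3), of "a/2" "1/2+a/2" "1 - of_nat k + a - b - c" "of_nat k + d"]
    unfolding A_def by blast
  obtain r where r: "r > 0" and rr: "\<And>x::complex. norm x < r \<Longrightarrow>
     (\<exists>S. (\<lambda>m. A m * (-4 * x / (1-x)^2)^m * (1-x) powr (-a)) sums S \<and>
          (\<lambda>n. (\<Sum>m\<le>n. A m * (-4)^m * pochhammer (a + 2 * of_nat m) (n-m) / fact (n-m)) * x^n) sums S)"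
    using analytic_main[OF K, of a] by blast
  define r' where "r' = min r (1/2)"
  have "summable (hyp_term [a/2, 1/2 + a/2, 1 - of_nat k + a - b - c, of_nat k + d] [1 + a - b, 1 + a - c, d] (- 4 * x / (1 - x)^2))
     \<and> summable (\<lambda>n. ?P a n * ?P b n * ?P c n / (fact n * ?P (1 + a - b) n * ?P (1 + a - c) n) * Q2 k (of_nat n) a b c d * x ^ n)
     \<and> hypergeom [a/2, 1/2 + a/2, 1 - of_nat k + a - b - c, of_nat k + d] [1 + a - b, 1 + a - c, d] (- 4 * x / (1 - x)^2)
        = (1 - x) powr a * (\<Sum>n. ?P a n * ?P b n * ?P c n / (fact n * ?P (1 + a - b) n * ?P (1 + a - c) n) * Q2 k (of_nat n) a b c d * x ^ n)"
    if x: "norm x < r'" for x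
  proof -
    have xr: "norm x < r" and x1: "norm x < 1" using x unfolding r'_def by auto
    hence x1n: "1 - x \<noteq> 0" by auto
    obtain S where S1: "(\<lambda>m. A m * (-4 * x / (1-x)^2)^m * (1-x) powr (-a)) sums S"
      and S2: "(\<lambda>n. (\<Sum>m\<le>n. A m * (-4)^m * pochhammer (a + 2 * of_nat m) (n-m) / fact (n-m)) * x^n) sums S"
      using rr[OF xr] by blast
    define W where "W = (1-x) powr (-a)"
    have W0: "W \<noteq> 0" unfolding W_def using x1n by simp
    have hy: "hyp_term [a/2, 1/2 + a/2, 1 - of_nat k + a - b - c, of_nat k + d] [1 + a - b, 1 + a - c, d] (- 4 * x / (1 - x)^2) m
        = A m * (-4 * x / (1-x)^2)^m" for m
      unfolding hyp_term_def A_def by (simp add: mult_ac)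
    have H: "hyp_term [a/2, 1/2 + a/2, 1 - of_nat k + a - b - c, of_nat k + d] [1 + a - b, 1 + a - c, d] (- 4 * x / (1 - x)^2) sums (S / W)"
    proof -
      have "(\<lambda>m. A m * (-4 * x / (1-x)^2)^m * W / W) sums (S / W)"
        using sums_divide[OF S1[folded W_def], of W] .
      moreover have "(\<lambda>m. A m * (-4 * x / (1-x)^2)^m * W / W) = (\<lambda>m. A m * (-4 * x / (1-x)^2)^m)"
        using W0 by simp
      moreover have "hyp_term [a/2, 1/2 + a/2, 1 - of_nat k + a - b - c, of_nat k + d] [1 + a - b, 1 + a - c, d] (- 4 * x / (1 - x)^2)
          = (\<lambda>m. A m * (-4 * x / (1-x)^2)^m)" using hy by (intro ext)
      ultimately show ?thesis by simp
    qed
    have T: "(\<lambda>n. ?P a n * ?P b n * ?P c n / (fact n * ?P (1 + a - b) n * ?P (1 + a - c) n) * Q2 k (of_nat n) a b c d * x ^ n) sums S"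
    proof -
      have "(\<Sum>m\<le>n. A m * (-4)^m * pochhammer (a + 2 * of_nat m) (n-m) / fact (n-m)) =
        ?P a n * ?P b n * ?P c n / (fact n * ?P (1 + a - b) n * ?P (1 + a - c) n) * Q2 k (of_nat n) a b c d" for n
        unfolding A_def by (rule finite_identity[OF nb nc nd ng nde])
      with S2 show ?thesis by simp
    qed
    have "S / W = (1 - x) powr a * S" unfolding W_def by (simp add: powr_minus divide_inverse mult_ac)
    with H T show ?thesis by (simp add: sums_iff hypergeom_def)
  qed
  moreover have "r' > 0" unfolding r'_def using r by simp
  ultimately show ?thesis unfolding Let_def by blast
qed


end
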